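(* Let $m\ge 1$ and $m_\alpha\ge 1$ be integers and $h\in\mathbb{R}$. Let $f_0\neq f_1$ be probability density functions on $\mathbb{R}$ and let $\{x_n\}_{n\ge1}$ be observed under the change-point model described in the context, with log-likelihood ratios $\mathrm{LLR}(i)=\ln\big(f_1(x_i)/f_0(x_i)\big)$, windowed sums $S_n=\sum_{i=n-m+1}^{n}\mathrm{LLR}(i)$ for $n\ge m$, and the finite moving average (FMA) stopping time $$T_{\mathrm{F}}(h)=\inf\{n\ge m:\ S_n\ge h\}.$$ Let $S_m=\sum_{i=1}^m \mathrm{LLR}(i)$. Then the worst-case probability of false alarm satisfies $$\mathbb{P}_{\mathrm{fa}}\big(T_{\mathrm{F}}(h),m_\alpha\big)\le \alpha(h,m_\alpha):=1-\big[\mathbb{P}_\infty(S_m<h)\big]^{m_\alpha},$$ and the worst-case probability of missed detection satisfies $$\mathbb{P}_{\mathrm{md}}\big(T_{\mathrm{F}}(h),m\big)\le \beta(h,m):=\mathbb{P}_1(S_m<h).$$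
   Context: Change-point model: for each $v\in\{1,2,\dots\}\cup\{\infty\}$, $\mathbb{P}_v$ is a probability measure under which the random variables $x_1,x_2,\dots$ are mutually independent, $x_n$ has density $f_0$ if $n<v$ or $n\ge v+m$, and $x_n$ has density $f_1$ if $v\le n<v+m$ (so under $\mathbb{P}_\infty$ all $x_n$ are i.i.d. with density $f_0$, and under $\mathbb{P}_1$ the samples $x_1,\dots,x_m$ have density $f_1$). The log-likelihood ratios are assumed to be well-defined real random variables. For a stopping time $T$ (with respect to the filtration generated by $x_1,x_2,\dots$): the worst-case probability of false alarm within a window of length $m_\alpha$ is $\mathbb{P}_{\mathrm{fa}}(T,m_\alpha)=\sup_{l\ge1}\mathbb{P}_\infty(l\le T<l+m_\alpha)$, and the worst-case probability of missed detection with maximal permitted delay $m$ is $\mathbb{P}_{\mathrm{md}}(T,m)=\sup_{v\ge1}\mathbb{P}_v(T\ge v+m\mid T\ge v)$. *)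

theory Defs
  imports "HOL-Probability.Probability"
begin

text \<open>Log-likelihood ratio of the i-th observation (observations indexed from 1).\<close>
definition LLR :: "(real \<Rightarrow> real) \<Rightarrow> (real \<Rightarrow> real) \<Rightarrow> (nat \<Rightarrow> 'a \<Rightarrow> real) \<Rightarrow> nat \<Rightarrow> 'a \<Rightarrow> real" where
  "LLR f0 f1 X i \<omega> = ln (f1 (X i \<omega>) / f0 (X i \<omega>))"

definition Swin :: "(real \<Rightarrow> real) \<Rightarrow> (real \<Rightarrow> real) \<Rightarrow> (nat \<Rightarrow> 'a \<Rightarrow> real) \<Rightarrow> nat \<Rightarrow> nat \<Rightarrow> 'a \<Rightarrow> real" where
  "Swin f0 f1 X m n \<omega> = (\<Sum>i\<in>{n - m + 1..n}. LLR f0 f1 X i \<omega>)"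

definition T_FMA :: "(real \<Rightarrow> real) \<Rightarrow> (real \<Rightarrow> real) \<Rightarrow> (nat \<Rightarrow> 'a \<Rightarrow> real) \<Rightarrow> nat \<Rightarrow> real \<Rightarrow> 'a \<Rightarrow> enat" where
  "T_FMA f0 f1 X m h \<omega> =
     (if \<exists>n\<ge>m. Swin f0 f1 X m n \<omega> \<ge> h
      then enat (LEAST n. n \<ge> m \<and> Swin f0 f1 X m n \<omega> \<ge> h) else \<infinity>)"

text \<open>Elementary conditional probability P(A | B) = P(A \<inter> B) / P(B) (0 if P(B) = 0).\<close>
definition cprob :: "'a measure \<Rightarrow> 'a set \<Rightarrow> 'a set \<Rightarrow> real" where
  "cprob M A B = measure M (A \<inter> B) / measure M B"

definition P_fa :: "(enat \<Rightarrow> 'a measure) \<Rightarrow> ('a \<Rightarrow> enat) \<Rightarrow> nat \<Rightarrow> real" where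
  "P_fa P T ma = (SUP l\<in>{1..}. measure (P \<infinity>)
       {\<omega> \<in> space (P \<infinity>). enat l \<le> T \<omega> \<and> T \<omega> < enat (l + ma)})"

definition P_md :: "(enat \<Rightarrow> 'a measure) \<Rightarrow> ('a \<Rightarrow> enat) \<Rightarrow> nat \<Rightarrow> real" where
  "P_md P T m = (SUP v\<in>{1..}. cprob (P (enat v))
       {\<omega> \<in> space (P (enat v)). T \<omega> \<ge> enat (v + m)}
       {\<omega> \<in> space (P (enat v)). T \<omega> \<ge> enat v})"

definition is_pdf :: "(real \<Rightarrow> real) \<Rightarrow> bool" where
  "is_pdf f \<longleftrightarrow> f \<in> borel_measurable borel \<and> (\<forall>x. 0 \<le> f x) \<and>
     (\<integral>\<^sup>+ x. ennreal (f x) \<partial>lborel) = 1"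

end

theory Submission
  imports Defs
begin

lemma cheb1:
  fixes a b :: "real \<Rightarrow> real" and \<mu> :: "real measure"
  assumes P: "prob_space \<mu>"
    and am[measurable]: "a \<in> borel_measurable \<mu>" and bm[measurable]: "b \<in> borel_measurable \<mu>"
    and ab: "\<And>x. \<bar>a x\<bar> \<le> 1" and bb: "\<And>x. \<bar>b x\<bar> \<le> 1"
    and amono: "\<And>s t. s \<le> t \<Longrightarrow> a t \<le> a s"
    and bmono: "\<And>s t. s \<le> t \<Longrightarrow> b t \<le> b s"
  shows "(\<integral>x. a x \<partial>\<mu>) * (\<integral>x. b x \<partial>\<mu>) \<le> (\<integral>x. a x * b x \<partial>\<mu>)"
proof -
  interpret prob_space \<mu> by fact
  have ia: "integrable \<mu> a" by (rule integrable_const_bound[where B=1]) (use ab in auto)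
  have ib: "integrable \<mu> b" by (rule integrable_const_bound[where B=1]) (use bb in auto)
  have iab: "integrable \<mu> (\<lambda>x. a x * b x)"
    by (rule integrable_const_bound[where B=1]) (use ab bb in \<open>auto simp: abs_mult intro!: AE_I2 mult_le_one\<close>)
  define A where "A = (\<integral>x. a x \<partial>\<mu>)"
  define B where "B = (\<integral>x. b x \<partial>\<mu>)"
  define C where "C = (\<integral>x. a x * b x \<partial>\<mu>)"
  have key: "0 \<le> (a s - a t) * (b s - b t)" for s t
  proof (cases "s \<le> t")
    case True then show ?thesis using amono[OF True] bmono[OF True] by (simp add: mult_nonneg_nonneg)
  next
    case False then have "t \<le> s" by simp
    then show ?thesis using amono[OF \<open>t \<le> s\<close>] bmono[OF \<open>t \<le> s\<close>] by (simp add: mult_nonpos_nonpos)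
  qed
  have inner: "(\<integral>t. (a s - a t) * (b s - b t) \<partial>\<mu>) = a s * b s - a s * B - b s * A + C" for s
  proof -
    have "(\<lambda>t. (a s - a t) * (b s - b t)) = (\<lambda>t. (a s * b s - a s * b t) - (b s * a t) + a t * b t)"
      by (auto simp: algebra_simps)
    then have "(\<integral>t. (a s - a t) * (b s - b t) \<partial>\<mu>) = (\<integral>t. (a s * b s - a s * b t) - (b s * a t) + a t * b t \<partial>\<mu>)" by simp
    also have "\<dots> = (\<integral>t. (a s * b s - a s * b t) - (b s * a t) \<partial>\<mu>) + C"
      unfolding C_def by (subst Bochner_Integration.integral_add) (use ia ib iab in auto)
    also have "(\<integral>t. (a s * b s - a s * b t) - (b s * a t) \<partial>\<mu>) = (\<integral>t. (a s * b s - a s * b t) \<partial>\<mu>) - (\<integral>t. b s * a t \<partial>\<mu>)"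
      by (subst Bochner_Integration.integral_diff) (use ia ib iab in auto)
    also have "(\<integral>t. (a s * b s - a s * b t) \<partial>\<mu>) = (\<integral>t. a s * b s \<partial>\<mu>) - (\<integral>t. a s * b t \<partial>\<mu>)"
      by (subst Bochner_Integration.integral_diff) (use ia ib iab in auto)
    finally show ?thesis by (simp add: A_def B_def prob_space)
  qed
  have "0 \<le> (\<integral>s. (\<integral>t. (a s - a t) * (b s - b t) \<partial>\<mu>) \<partial>\<mu>)"
    by (intro Bochner_Integration.integral_nonneg key)
  also have "\<dots> = (\<integral>s. (a s * b s - B * a s) - A * b s + C \<partial>\<mu>)"
    by (simp add: inner mult.commute)
  also have "\<dots> = (\<integral>s. (a s * b s - B * a s) - A * b s \<partial>\<mu>) + C"
    by (subst Bochner_Integration.integral_add) (use ia ib iab in \<open>auto simp: prob_space\<close>)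
  also have "(\<integral>s. (a s * b s - B * a s) - A * b s \<partial>\<mu>) = (\<integral>s. (a s * b s - B * a s) \<partial>\<mu>) - (\<integral>s. A * b s \<partial>\<mu>)"
    by (subst Bochner_Integration.integral_diff) (use ia ib iab in auto)
  also have "(\<integral>s. (a s * b s - B * a s) \<partial>\<mu>) = C - (\<integral>s. B * a s \<partial>\<mu>)"
    unfolding C_def by (subst Bochner_Integration.integral_diff) (use ia ib iab in auto)
  finally have "0 \<le> 2 * C - 2 * A * B" by (simp add: A_def B_def)
  then show ?thesis by (simp add: A_def B_def C_def)
qed

lemma bint:
  fixes f :: "'a \<Rightarrow> real"
  assumes "prob_space M" "f \<in> borel_measurable M" "\<And>x. x \<in> space M \<Longrightarrow> \<bar>f x\<bar> \<le> B"
  shows "integrable M f"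
proof -
  interpret prob_space M by fact
  show ?thesis by (rule integrable_const_bound[where B=B]) (use assms in auto)
qed

definition antiI :: "nat set \<Rightarrow> ((nat \<Rightarrow> real) \<Rightarrow> real) \<Rightarrow> bool" where
  "antiI I f \<longleftrightarrow> (\<forall>x\<in>PiE I (\<lambda>_. UNIV). \<forall>y\<in>PiE I (\<lambda>_. UNIV). (\<forall>j\<in>I. x j \<le> y j) \<longrightarrow> f y \<le> f x)"

lemma harris:
  fixes \<mu> :: "real measure" and I :: "nat set"
  assumes Pmu: "prob_space \<mu>" and sb: "sets \<mu> = sets borel" and fin: "finite I"
  shows "\<And>f g. f \<in> borel_measurable (PiM I (\<lambda>_. \<mu>)) \<Longrightarrow> g \<in> borel_measurable (PiM I (\<lambda>_. \<mu>)) \<Longrightarrow>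
     (\<And>x. x \<in> space (PiM I (\<lambda>_. \<mu>)) \<Longrightarrow> \<bar>f x\<bar> \<le> 1) \<Longrightarrow> (\<And>x. x \<in> space (PiM I (\<lambda>_. \<mu>)) \<Longrightarrow> \<bar>g x\<bar> \<le> 1) \<Longrightarrow>
     antiI I f \<Longrightarrow> antiI I g \<Longrightarrow>
     (\<integral>x. f x \<partial>PiM I (\<lambda>_. \<mu>)) * (\<integral>x. g x \<partial>PiM I (\<lambda>_. \<mu>)) \<le> (\<integral>x. f x * g x \<partial>PiM I (\<lambda>_. \<mu>))"
  using fin
proof (induction I rule: finite_induct)
  case empty
  then show ?case by (simp add: PiM_empty lebesgue_integral_count_space_finite)
next
  case (insert i I f g)
  interpret product_prob_space "\<lambda>_::nat. \<mu>" UNIV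
    by (intro product_prob_space.intro product_sigma_finite.intro product_prob_space_axioms.intro)
       (auto simp: Pmu prob_space_imp_sigma_finite)
  interpret mu: prob_space \<mu> by (rule Pmu)
  have spmu: "space \<mu> = UNIV" using sets_eq_imp_space_eq[OF sb] by simp
  let ?Q = "PiM (insert i I) (\<lambda>_. \<mu>)"
  let ?R = "PiM I (\<lambda>_. \<mu>)"
  have PQ: "prob_space ?Q" and PR: "prob_space ?R" by (auto intro!: prob_space_PiM Pmu)
  have upd: "x(i:=t) \<in> space ?Q" if "x \<in> space ?R" for x t
    using that by (auto simp: space_PiM spmu PiE_iff extensional_def)
  note fm[measurable] = insert.prems(1) and gm[measurable] = insert.prems(2)
  have fgm: "(\<lambda>x. f x * g x) \<in> borel_measurable ?Q" by measurable
  have fu[measurable]: "(\<lambda>(x, t). f (x(i:=t))) \<in> borel_measurable (?R \<Otimes>\<^sub>M \<mu>)"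
    using measurable_compose[OF measurable_add_dim[of i I "\<lambda>_. \<mu>"] fm] by (simp add: case_prod_beta')
  have gu[measurable]: "(\<lambda>(x, t). g (x(i:=t))) \<in> borel_measurable (?R \<Otimes>\<^sub>M \<mu>)"
    using measurable_compose[OF measurable_add_dim[of i I "\<lambda>_. \<mu>"] gm] by (simp add: case_prod_beta')
  have fgu[measurable]: "(\<lambda>(x, t). f (x(i:=t)) * g (x(i:=t))) \<in> borel_measurable (?R \<Otimes>\<^sub>M \<mu>)"
    using measurable_compose[OF measurable_add_dim[of i I "\<lambda>_. \<mu>"] fgm] by (simp add: case_prod_beta')
  define F where "F x = (\<integral>t. f (x(i:=t)) \<partial>\<mu>)" for x
  define G where "G x = (\<integral>t. g (x(i:=t)) \<partial>\<mu>)" for x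
  define H where "H x = (\<integral>t. f (x(i:=t)) * g (x(i:=t)) \<partial>\<mu>)" for x
  have Fm[measurable]: "F \<in> borel_measurable ?R" unfolding F_def
    by (rule sigma_finite_measure.borel_measurable_lebesgue_integral[OF prob_space_imp_sigma_finite[OF Pmu]]) (use fu in simp)
  have Gm[measurable]: "G \<in> borel_measurable ?R" unfolding G_def
    by (rule sigma_finite_measure.borel_measurable_lebesgue_integral[OF prob_space_imp_sigma_finite[OF Pmu]]) (use gu in simp)
  have Hm[measurable]: "H \<in> borel_measurable ?R" unfolding H_def
    by (rule sigma_finite_measure.borel_measurable_lebesgue_integral[OF prob_space_imp_sigma_finite[OF Pmu]]) (use fgu in simp)
  have secm: "(\<lambda>t. k (x(i:=t))) \<in> borel_measurable \<mu>"
    if "x \<in> space ?R" "(\<lambda>(x, t). k (x(i:=t))) \<in> borel_measurable (?R \<Otimes>\<^sub>M \<mu>)" for x and k :: "(nat \<Rightarrow> real) \<Rightarrow> real"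
    using measurable_Pair2[OF that(2) that(1)] by simp
  have fb: "\<bar>f (x(i:=t))\<bar> \<le> 1" "\<bar>g (x(i:=t))\<bar> \<le> 1" if "x \<in> space ?R" for x t
    using insert.prems(3,4) upd[OF that] by auto
  have Fb: "\<bar>F x\<bar> \<le> 1" if "x \<in> space ?R" for x
  proof -
    have "\<bar>F x\<bar> \<le> (\<integral>t. 1 \<partial>\<mu>)" unfolding F_def
      by (rule integral_abs_bound_integral) (auto intro!: bint[OF Pmu] secm[OF that fu] fb[OF that])
    then show ?thesis by (simp add: prob_space.prob_space[OF Pmu])
  qed
  have Gb: "\<bar>G x\<bar> \<le> 1" if "x \<in> space ?R" for x
  proof -
    have "\<bar>G x\<bar> \<le> (\<integral>t. 1 \<partial>\<mu>)" unfolding G_def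
      by (rule integral_abs_bound_integral) (auto intro!: bint[OF Pmu] secm[OF that gu] fb[OF that])
    then show ?thesis by (simp add: prob_space.prob_space[OF Pmu])
  qed
  have Hb: "\<bar>H x\<bar> \<le> 1" if "x \<in> space ?R" for x
  proof -
    have "\<bar>H x\<bar> \<le> (\<integral>t. 1 \<partial>\<mu>)" unfolding H_def
      by (rule integral_abs_bound_integral)
         (auto intro!: bint[OF Pmu, where B=1] secm[OF that fgu] fb[OF that] simp: abs_mult intro!: mult_le_one)
    then show ?thesis by (simp add: prob_space.prob_space[OF Pmu])
  qed
  have spR: "space ?R = PiE I (\<lambda>_. UNIV)" by (simp add: space_PiM spmu)
  have updE: "x(i:=t) \<in> PiE (insert i I) (\<lambda>_. UNIV)" if "x \<in> PiE I (\<lambda>_. UNIV)" for x :: "nat \<Rightarrow> real" and t :: real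
    using that insert.hyps(2) by (auto simp: PiE_iff extensional_def)
  have fa: "f (y(i:=t)) \<le> f (x(i:=t))" "g (y(i:=t)) \<le> g (x(i:=t))"
    if "x \<in> PiE I (\<lambda>_. UNIV)" "y \<in> PiE I (\<lambda>_. UNIV)" "\<forall>j\<in>I. x j \<le> y j" for x y and t :: real
    using insert.prems(5,6) updE[OF that(1)] updE[OF that(2)] that(3) unfolding antiI_def by auto
  have fa2: "f (x(i:=t)) \<le> f (x(i:=s))" "g (x(i:=t)) \<le> g (x(i:=s))"
    if "x \<in> PiE I (\<lambda>_. UNIV)" "s \<le> t" for x :: "nat \<Rightarrow> real" and s t :: real
    using insert.prems(5,6) updE[OF that(1)] that(2) unfolding antiI_def by (auto 4 4)
  have aF: "antiI I F" unfolding antiI_def F_def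
  proof (intro ballI impI)
    fix x y :: "nat \<Rightarrow> real" assume xy: "x \<in> PiE I (\<lambda>_. UNIV)" "y \<in> PiE I (\<lambda>_. UNIV)" "\<forall>j\<in>I. x j \<le> y j"
    show "(\<integral>t. f (y(i:=t)) \<partial>\<mu>) \<le> (\<integral>t. f (x(i:=t)) \<partial>\<mu>)"
      using xy by (intro integral_mono bint[OF Pmu, where B=1] secm fu fa fb) (auto simp: spR)
  qed
  have aG: "antiI I G" unfolding antiI_def G_def
  proof (intro ballI impI)
    fix x y :: "nat \<Rightarrow> real" assume xy: "x \<in> PiE I (\<lambda>_. UNIV)" "y \<in> PiE I (\<lambda>_. UNIV)" "\<forall>j\<in>I. x j \<le> y j"
    show "(\<integral>t. g (y(i:=t)) \<partial>\<mu>) \<le> (\<integral>t. g (x(i:=t)) \<partial>\<mu>)"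
      using xy by (intro integral_mono bint[OF Pmu, where B=1] secm gu fa fb) (auto simp: spR)
  qed
  have pw: "F x * G x \<le> H x" if x: "x \<in> space ?R" for x
    unfolding F_def G_def H_def
  proof (rule cheb1[OF Pmu secm[OF x fu] secm[OF x gu]])
    show "\<bar>f (x(i:=t))\<bar> \<le> 1" "\<bar>g (x(i:=t))\<bar> \<le> 1" for t using fb[OF x] by auto
    show "f (x(i:=t)) \<le> f (x(i:=s))" "g (x(i:=t)) \<le> g (x(i:=s))" if "s \<le> t" for s t
      using fa2[OF _ that] x by (auto simp: spR)
  qed
  have eqf: "(\<integral>x. f x \<partial>?Q) = (\<integral>x. F x \<partial>?R)" unfolding F_def
    by (rule product_integral_insert[OF insert.hyps(1,2)]) (intro bint[OF PQ, where B=1] fm insert.prems(3))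
  have eqg: "(\<integral>x. g x \<partial>?Q) = (\<integral>x. G x \<partial>?R)" unfolding G_def
    by (rule product_integral_insert[OF insert.hyps(1,2)]) (intro bint[OF PQ, where B=1] gm insert.prems(4))
  have eqh: "(\<integral>x. f x * g x \<partial>?Q) = (\<integral>x. H x \<partial>?R)" unfolding H_def
    by (rule product_integral_insert[OF insert.hyps(1,2)])
       (intro bint[OF PQ, where B=1] fgm, use insert.prems(3,4) in \<open>auto simp: abs_mult intro!: mult_le_one\<close>)
  have "(\<integral>x. F x \<partial>?R) * (\<integral>x. G x \<partial>?R) \<le> (\<integral>x. F x * G x \<partial>?R)"
    by (rule insert.IH[OF Fm Gm Fb Gb aF aG])
  also have "\<dots> \<le> (\<integral>x. H x \<partial>?R)"
    by (intro integral_mono pw bint[OF PR, where B=1] Hb) (use Fb Gb in \<open>auto simp: abs_mult intro!: mult_le_one\<close>)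
  finally show ?case using eqf eqg eqh by simp
qed

lemma vecdist:
  fixes M :: "'a measure" and Y :: "nat \<Rightarrow> 'a \<Rightarrow> real" and \<nu> :: "real measure"
  assumes PM: "prob_space M" and ind: "prob_space.indep_vars M (\<lambda>_. borel) Y J"
    and W: "finite W" "W \<noteq> {}" "W \<subseteq> J" and law: "\<And>i. i \<in> W \<Longrightarrow> distr M borel (Y i) = \<nu>"
  shows "distr M (PiM W (\<lambda>_. borel)) (\<lambda>\<omega>. \<lambda>i\<in>W. Y i \<omega>) = PiM W (\<lambda>_. \<nu>)"
proof -
  interpret prob_space M by fact
  have indW: "indep_vars (\<lambda>_. borel) Y W" by (rule indep_vars_subset[OF ind W(3)])
  have rv: "random_variable borel (Y i)" if "i \<in> W" for i
    using indW that by (auto simp: indep_vars_def)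
  have "distr M (PiM W (\<lambda>_. borel)) (\<lambda>\<omega>. \<lambda>i\<in>W. Y i \<omega>) = PiM W (\<lambda>i. distr M borel (Y i))"
    using indep_vars_iff_distr_eq_PiM'[where I=W and M'="\<lambda>_. borel" and X=Y] rv indW W(2) by simp
  also have "\<dots> = PiM W (\<lambda>_. \<nu>)" by (rule PiM_cong) (auto simp: law)
  finally show ?thesis .
qed

lemma winprob:
  fixes Y :: "nat \<Rightarrow> 'a \<Rightarrow> real"
  assumes PM: "prob_space M" and ind: "prob_space.indep_vars M (\<lambda>_. borel) Y J"
    and K: "{a+1..a+m} \<subseteq> J" and m: "m \<ge> 1"
    and law: "\<And>i. i \<in> {a+1..a+m} \<Longrightarrow> distr M borel (Y i) = \<nu>"
    and Pnu: "prob_space \<nu>" and snu: "sets \<nu> = sets borel"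
  shows "measure M {\<omega>\<in>space M. (\<Sum>i\<in>{a+1..a+m}. Y i \<omega>) < h} =
         measure (PiM {1..m} (\<lambda>_. \<nu>)) {y\<in>space (PiM {1..m} (\<lambda>_. \<nu>)). (\<Sum>i\<in>{1..m}. y i) < h}"
proof -
  interpret prob_space M by fact
  let ?K = "{a+1..a+m}"
  let ?V = "\<lambda>\<omega>. \<lambda>i\<in>?K. Y i \<omega>"
  have spnu: "space \<nu> = UNIV" using sets_eq_imp_space_eq[OF snu] by simp
  have rv[measurable]: "Y i \<in> borel_measurable M" if "i \<in> ?K" for i
    using ind that K by (auto simp: indep_vars_def)
  have Vm: "?V \<in> measurable M (PiM ?K (\<lambda>_. borel))"
    by (rule measurable_restrict) (use rv in auto)
  define A where "A = {y\<in>space (PiM ?K (\<lambda>_. borel)). (\<Sum>i\<in>?K. y i) < (h::real)}"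
  have Am: "A \<in> sets (PiM ?K (\<lambda>_. borel))" unfolding A_def by measurable
  have D: "distr M (PiM ?K (\<lambda>_. borel)) ?V = PiM ?K (\<lambda>_. \<nu>)"
    by (rule vecdist[OF PM ind]) (use K m law in auto)
  have "measure M {\<omega>\<in>space M. (\<Sum>i\<in>?K. Y i \<omega>) < h} = measure M (?V -` A \<inter> space M)"
    by (rule arg_cong[where f="measure M"]) (auto simp: A_def space_PiM)
  also have "\<dots> = measure (distr M (PiM ?K (\<lambda>_. borel)) ?V) A"
    by (rule measure_distr[symmetric, OF Vm Am])
  also have "\<dots> = measure (PiM ?K (\<lambda>_. \<nu>)) A" by (simp only: D)
  finally have 1: "measure M {\<omega>\<in>space M. (\<Sum>i\<in>?K. Y i \<omega>) < h} = measure (PiM ?K (\<lambda>_. \<nu>)) A" .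
  let ?S = "\<lambda>\<omega>. \<lambda>j\<in>{1..m}. \<omega> (j + a)"
  have R: "distr (PiM ?K (\<lambda>_. \<nu>)) (PiM {1..m} (\<lambda>_. \<nu>)) ?S = PiM {1..m} (\<lambda>_. \<nu>)"
    using distr_PiM_reindex[of ?K "\<lambda>_. \<nu>" "\<lambda>j. j + a" "{1..m}"] Pnu by (auto simp: inj_on_def)
  define B where "B = {y\<in>space (PiM {1..m} (\<lambda>_. \<nu>)). (\<Sum>i\<in>{1..m}. y i) < h}"
  have comp: "(\<lambda>x. x i) \<in> borel_measurable (PiM {1..m} (\<lambda>_. \<nu>))" if "i \<in> {1..m}" for i
    using measurable_component_singleton[OF that, of "\<lambda>_. \<nu>"] measurable_cong_sets[OF refl snu] by metis
  have fsm: "(\<lambda>y. \<Sum>i\<in>{1..m}. y i) \<in> borel_measurable (PiM {1..m} (\<lambda>_. \<nu>))"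
    by (intro borel_measurable_sum comp)
  have "(\<lambda>y. \<Sum>i\<in>{1..m}. y i) -` {..<h} \<inter> space (PiM {1..m} (\<lambda>_. \<nu>)) \<in> sets (PiM {1..m} (\<lambda>_. \<nu>))"
    by (rule measurable_sets[OF fsm]) simp
  moreover have "(\<lambda>y. \<Sum>i\<in>{1..m}. y i) -` {..<h} \<inter> space (PiM {1..m} (\<lambda>_. \<nu>)) = B"
    unfolding B_def by auto
  ultimately have Bm: "B \<in> sets (PiM {1..m} (\<lambda>_. \<nu>))" by simp
  have Sm: "?S \<in> measurable (PiM ?K (\<lambda>_. \<nu>)) (PiM {1..m} (\<lambda>_. \<nu>))"
    by (rule measurable_restrict) (auto intro: measurable_component_singleton)
  have "measure (PiM {1..m} (\<lambda>_. \<nu>)) B = measure (distr (PiM ?K (\<lambda>_. \<nu>)) (PiM {1..m} (\<lambda>_. \<nu>)) ?S) B"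
    by (simp only: R)
  also have "\<dots> = measure (PiM ?K (\<lambda>_. \<nu>)) (?S -` B \<inter> space (PiM ?K (\<lambda>_. \<nu>)))"
    by (rule measure_distr[OF Sm Bm])
  also have "?S -` B \<inter> space (PiM ?K (\<lambda>_. \<nu>)) = A"
  proof -
    have "(\<Sum>j\<in>{1..m}. y (j + a)) = (\<Sum>i\<in>?K. y i)" for y :: "nat \<Rightarrow> real"
      using sum.shift_bounds_cl_nat_ivl[of y 1 a m] by (simp add: add.commute)
    then show ?thesis by (auto simp: A_def B_def space_PiM spnu PiE_iff extensional_def)
  qed
  finally show ?thesis using 1 B_def by simp
qed

lemma sumset_meas:
  fixes \<nu> :: "real measure"
  assumes snu: "sets \<nu> = sets borel" and w: "w \<subseteq> W"
  shows "{y\<in>space (PiM W (\<lambda>_. \<nu>)). (\<Sum>i\<in>w. y i) < h} \<in> sets (PiM W (\<lambda>_. \<nu>))"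
proof -
  have comp: "(\<lambda>x. x i) \<in> borel_measurable (PiM W (\<lambda>_. \<nu>))" if "i \<in> w" for i
    using measurable_component_singleton[of i W "\<lambda>_. \<nu>"] that w measurable_cong_sets[OF refl snu] by (metis subsetD)
  have fsm: "(\<lambda>y. \<Sum>i\<in>w. y i) \<in> borel_measurable (PiM W (\<lambda>_. \<nu>))"
    by (intro borel_measurable_sum comp)
  have "(\<lambda>y. \<Sum>i\<in>w. y i) -` {..<h} \<inter> space (PiM W (\<lambda>_. \<nu>)) \<in> sets (PiM W (\<lambda>_. \<nu>))"
    by (rule measurable_sets[OF fsm]) simp
  moreover have "(\<lambda>y. \<Sum>i\<in>w. y i) -` {..<h} \<inter> space (PiM W (\<lambda>_. \<nu>)) = {y\<in>space (PiM W (\<lambda>_. \<nu>)). (\<Sum>i\<in>w. y i) < h}"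
    by auto
  ultimately show ?thesis by simp
qed

lemma harris_events:
  fixes \<nu> :: "real measure" and w :: "nat \<Rightarrow> nat set" and W :: "nat set"
  assumes Pnu: "prob_space \<nu>" and snu: "sets \<nu> = sets borel" and W: "finite W"
    and K: "finite K" and wW: "\<And>n. n \<in> K \<Longrightarrow> w n \<subseteq> W"
  shows "(\<Prod>n\<in>K. measure (PiM W (\<lambda>_. \<nu>)) {y\<in>space (PiM W (\<lambda>_. \<nu>)). (\<Sum>i\<in>w n. y i) < h})
     \<le> measure (PiM W (\<lambda>_. \<nu>)) {y\<in>space (PiM W (\<lambda>_. \<nu>)). \<forall>n\<in>K. (\<Sum>i\<in>w n. y i) < h}"
  using K wW
proof (induction K rule: finite_induct)
  case empty
  have "prob_space (PiM W (\<lambda>_. \<nu>))" by (auto intro!: prob_space_PiM Pnu)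
  then show ?case by (simp add: prob_space.prob_space)
next
  case (insert n K)
  let ?R = "PiM W (\<lambda>_. \<nu>)"
  have PR: "prob_space ?R" by (auto intro!: prob_space_PiM Pnu)
  interpret R: prob_space ?R by fact
  have spnu: "space \<nu> = UNIV" using sets_eq_imp_space_eq[OF snu] by simp
  have spR: "space ?R = PiE W (\<lambda>_. UNIV)" by (simp add: space_PiM spnu)
  define A where "A = {y\<in>space ?R. (\<Sum>i\<in>w n. y i) < h}"
  define B where "B = {y\<in>space ?R. \<forall>n\<in>K. (\<Sum>i\<in>w n. y i) < h}"
  have Am: "A \<in> sets ?R" unfolding A_def by (rule sumset_meas[OF snu]) (use insert in auto)
  have Bm: "B \<in> sets ?R"
    unfolding B_def by (rule sets.sets_Collect_finite_All[OF _ insert(1)], rule sumset_meas[OF snu]) (use insert in auto)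
  have eq: "{y\<in>space ?R. \<forall>k\<in>insert n K. (\<Sum>i\<in>w k. y i) < h} = A \<inter> B" unfolding A_def B_def by auto
  have sumle: "(\<Sum>i\<in>w k. x i) \<le> (\<Sum>i\<in>w k. y i)" if "\<forall>j\<in>W. x j \<le> y j" "w k \<subseteq> W" for x y :: "nat \<Rightarrow> real" and k
    by (rule sum_mono) (use that in auto)
  have aA: "antiI W (indicator A)" unfolding antiI_def A_def
    using sumle[of _ _ n] insert.prems by (auto simp: indicator_def spR intro: le_less_trans)
  have aB: "antiI W (indicator B)" unfolding antiI_def B_def
  proof (intro ballI impI)
    fix x y :: "nat \<Rightarrow> real" assume xy: "x \<in> PiE W (\<lambda>_. UNIV)" "y \<in> PiE W (\<lambda>_. UNIV)" "\<forall>j\<in>W. x j \<le> y j"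
    have "(\<Sum>i\<in>w k. x i) < h" if "\<forall>n\<in>K. (\<Sum>i\<in>w n. y i) < h" "k \<in> K" for k
      using sumle[OF xy(3), of k] insert.prems[of k] that by force
    then show "indicator {y \<in> space ?R. \<forall>n\<in>K. (\<Sum>i\<in>w n. y i) < h} y \<le> (indicator {y \<in> space ?R. \<forall>n\<in>K. (\<Sum>i\<in>w n. y i) < h} x :: real)"
      using xy by (auto simp: indicator_def spR)
  qed
  have "measure ?R A * measure ?R B = (\<integral>x. indicator A x \<partial>?R) * (\<integral>x. indicator B x \<partial>?R)"
    using Am Bm by simp
  also have "\<dots> \<le> (\<integral>x. indicator A x * indicator B x \<partial>?R)"
    by (rule harris[OF Pnu snu W]) (use Am Bm aA aB in \<open>auto simp del: indicator_simps\<close>)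
  also have "\<dots> = measure ?R (A \<inter> B)"
    using Am Bm by (simp add: indicator_inter_arith[symmetric])
  finally have 1: "measure ?R A * measure ?R B \<le> measure ?R (A \<inter> B)" .
  have "(\<Prod>k\<in>insert n K. measure ?R {y\<in>space ?R. (\<Sum>i\<in>w k. y i) < h}) = measure ?R A * (\<Prod>k\<in>K. measure ?R {y\<in>space ?R. (\<Sum>i\<in>w k. y i) < h})"
    using insert(1,2) by (simp add: A_def)
  also have "\<dots> \<le> measure ?R A * measure ?R B"
    using insert.IH insert.prems by (intro mult_left_mono) (auto simp: B_def)
  finally show ?case using 1 eq by simp
qed

lemma transfer:
  fixes M :: "'a measure" and Y :: "nat \<Rightarrow> 'a \<Rightarrow> real" and \<nu> :: "real measure"
  assumes PM: "prob_space M" and ind: "prob_space.indep_vars M (\<lambda>_. borel) Y J"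
    and W: "finite W" "W \<noteq> {}" "W \<subseteq> J" and law: "\<And>i. i \<in> W \<Longrightarrow> distr M borel (Y i) = \<nu>"
    and snu: "sets \<nu> = sets borel"
    and Qm: "{y\<in>space (PiM W (\<lambda>_. borel)). Q y} \<in> sets (PiM W (\<lambda>_. borel))"
  shows "{\<omega>\<in>space M. Q (\<lambda>i\<in>W. Y i \<omega>)} \<in> sets M \<and>
         measure M {\<omega>\<in>space M. Q (\<lambda>i\<in>W. Y i \<omega>)} = measure (PiM W (\<lambda>_. \<nu>)) {y\<in>space (PiM W (\<lambda>_. \<nu>)). Q y}"
proof -
  interpret prob_space M by fact
  let ?V = "\<lambda>\<omega>. \<lambda>i\<in>W. Y i \<omega>"
  have rv: "Y i \<in> borel_measurable M" if "i \<in> W" for i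
    using ind that W by (auto simp: indep_vars_def)
  have Vm: "?V \<in> measurable M (PiM W (\<lambda>_. borel))"
    by (rule measurable_restrict) (use rv in auto)
  have D: "distr M (PiM W (\<lambda>_. borel)) ?V = PiM W (\<lambda>_. \<nu>)"
    by (rule vecdist[OF PM ind W law])
  have spnu: "space \<nu> = UNIV" using sets_eq_imp_space_eq[OF snu] by simp
  let ?A = "{y\<in>space (PiM W (\<lambda>_. borel)). Q y}"
  have eqs: "{\<omega>\<in>space M. Q (?V \<omega>)} = ?V -` ?A \<inter> space M"
    by (auto simp: space_PiM)
  have sp: "space (PiM W (\<lambda>_. \<nu>)) = space (PiM W (\<lambda>_. borel))" by (simp add: space_PiM spnu)
  show ?thesis
  proof
    show "{\<omega>\<in>space M. Q (?V \<omega>)} \<in> sets M" unfolding eqs by (rule measurable_sets[OF Vm Qm])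
    have "measure M {\<omega>\<in>space M. Q (?V \<omega>)} = measure (distr M (PiM W (\<lambda>_. borel)) ?V) ?A"
      unfolding eqs by (rule measure_distr[symmetric, OF Vm Qm])
    also have "\<dots> = measure (PiM W (\<lambda>_. \<nu>)) ?A" by (simp only: D)
    finally show "measure M {\<omega>\<in>space M. Q (?V \<omega>)} = measure (PiM W (\<lambda>_. \<nu>)) {y\<in>space (PiM W (\<lambda>_. \<nu>)). Q y}"
      by (simp only: sp)
  qed
qed

lemma T_ge:
  "enat k \<le> T_FMA f0 f1 X m h \<omega> \<longleftrightarrow> (\<forall>n. m \<le> n \<and> n < k \<longrightarrow> Swin f0 f1 X m n \<omega> < h)"
proof (cases "\<exists>n\<ge>m. Swin f0 f1 X m n \<omega> \<ge> h")
  case True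
  let ?L = "LEAST n. n \<ge> m \<and> Swin f0 f1 X m n \<omega> \<ge> h"
  have L: "?L \<ge> m \<and> Swin f0 f1 X m ?L \<omega> \<ge> h" using LeastI_ex[of "\<lambda>n. n \<ge> m \<and> Swin f0 f1 X m n \<omega> \<ge> h"] True by blast
  have Lle: "?L \<le> n" if "n \<ge> m" "Swin f0 f1 X m n \<omega> \<ge> h" for n using that by (intro Least_le) auto
  show ?thesis using L Lle unfolding T_FMA_def
    by (subst if_P[OF True]) (auto simp: not_less, meson leD le_trans not_le)
next
  case False
  then show ?thesis unfolding T_FMA_def by (subst if_not_P[OF False]) (use False in \<open>auto simp: not_le, meson not_le\<close>)
qed

theorem theorem1:
  fixes m ma :: nat and h :: real
    and f0 f1 :: "real \<Rightarrow> real"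
    and P :: "enat \<Rightarrow> 'a measure"
    and X :: "nat \<Rightarrow> 'a \<Rightarrow> real"
  assumes m: "m \<ge> 1" and ma: "ma \<ge> 1"
    and pdf0: "is_pdf f0" and pdf1: "is_pdf f1" and neq: "f0 \<noteq> f1"
    and prob: "\<And>v. v \<ge> 1 \<Longrightarrow> prob_space (P v)"
    and indep: "\<And>v. v \<ge> 1 \<Longrightarrow> prob_space.indep_vars (P v) (\<lambda>_. borel) X {1..}"
    and distr: "\<And>v n. v \<ge> 1 \<Longrightarrow> n \<ge> 1 \<Longrightarrow>
        distributed (P v) lborel (X n)
          (\<lambda>x. ennreal (if v \<le> enat n \<and> enat n < v + enat m then f1 x else f0 x))"
    and llr_ok: "\<And>v n. v \<ge> 1 \<Longrightarrow> n \<ge> 1 \<Longrightarrow>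
        AE \<omega> in P v. 0 < f0 (X n \<omega>) \<and> 0 < f1 (X n \<omega>)"
  shows "(P_fa P (T_FMA f0 f1 X m h) ma
           \<le> 1 - (measure (P \<infinity>) {\<omega> \<in> space (P \<infinity>). Swin f0 f1 X m m \<omega> < h}) ^ ma) \<and>
         (P_md P (T_FMA f0 f1 X m h) m
           \<le> measure (P 1) {\<omega> \<in> space (P 1). Swin f0 f1 X m m \<omega> < h})"
proof -
  define Y where "Y = LLR f0 f1 X"
  define \<psi> where "\<psi> x = ln (f1 x / f0 x)" for x
  have f0m[measurable]: "f0 \<in> borel_measurable borel" using pdf0 by (simp add: is_pdf_def)
  have f1m[measurable]: "f1 \<in> borel_measurable borel" using pdf1 by (simp add: is_pdf_def)
  have psim[measurable]: "\<psi> \<in> borel_measurable borel" unfolding \<psi>_def by measurable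
  have Yeq: "Y = (\<lambda>i \<omega>. \<psi> (X i \<omega>))" by (simp add: Y_def LLR_def \<psi>_def fun_eq_iff)
  have SwinY: "Swin f0 f1 X m n \<omega> = (\<Sum>i\<in>{n-m+1..n}. Y i \<omega>)" for n \<omega> by (simp add: Swin_def Y_def)
  have win: "{n-m+1..n} = {(n-m)+1..(n-m)+m}" if "n \<ge> m" for n using that by auto
  define \<nu>0 where "\<nu>0 = distr (density lborel (\<lambda>x. ennreal (f0 x))) borel \<psi>"
  define \<nu>1 where "\<nu>1 = distr (density lborel (\<lambda>x. ennreal (f1 x))) borel \<psi>"
  have lawg: "distr (P v) borel (Y n) = distr (density lborel (\<lambda>x. ennreal (if v \<le> enat n \<and> enat n < v + enat m then f1 x else f0 x))) borel \<psi>"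
    if v: "v \<ge> 1" and n: "n \<ge> 1" for v n
  proof -
    note D = distr[OF v n, unfolded distributed_def]
    have Xm: "X n \<in> measurable (P v) lborel" using D by blast
    have "distr (P v) borel (Y n) = distr (P v) borel (\<psi> \<circ> X n)" by (simp add: Yeq comp_def)
    also have "\<dots> = distr (distr (P v) lborel (X n)) borel \<psi>"
      by (rule distr_distr[symmetric]) (use Xm in auto)
    also have "\<dots> = distr (density lborel (\<lambda>x. ennreal (if v \<le> enat n \<and> enat n < v + enat m then f1 x else f0 x))) borel \<psi>"
      using D by simp
    finally show ?thesis .
  qed
  have law0: "distr (P \<infinity>) borel (Y n) = \<nu>0" if "n \<ge> 1" for n
    using lawg[of \<infinity> n] that by (simp add: \<nu>0_def)
  have law1: "distr (P (enat v)) borel (Y n) = \<nu>1" if "v \<ge> 1" "v \<le> n" "n < v + m" for v n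
    using lawg[of "enat v" n] that by (simp add: \<nu>1_def one_enat_def)
  have indY: "prob_space.indep_vars (P v) (\<lambda>_. borel) Y {1..}" if "v \<ge> 1" for v
    unfolding Yeq by (rule prob_space.indep_vars_compose2[OF prob[OF that] indep[OF that]]) auto
  have Ym: "Y n \<in> borel_measurable (P v)" if "v \<ge> 1" "n \<ge> 1" for v n
    using indY[OF that(1)] prob[OF that(1)] that(2) by (auto simp: prob_space.indep_vars_def)
  have Pnu0: "prob_space \<nu>0" using law0[of 1] prob[of \<infinity>] Ym[of \<infinity> 1]
    by (metis enat_ord_code(3) le_numeral_extra(4) prob_space.prob_space_distr)
  have Pnu1: "prob_space \<nu>1"
  proof -
    have "distr (P 1) borel (Y 1) = \<nu>1" using law1[of 1 1] m by (simp add: one_enat_def)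
    moreover have "prob_space (distr (P 1) borel (Y 1))"
      by (rule prob_space.prob_space_distr[OF prob Ym]) auto
    ultimately show ?thesis by simp
  qed
  have snu0: "sets \<nu>0 = sets borel" by (simp add: \<nu>0_def)
  have snu1: "sets \<nu>1 = sets borel" by (simp add: \<nu>1_def)
  define p0 where "p0 = measure (PiM {1..m} (\<lambda>_. \<nu>0)) {y\<in>space (PiM {1..m} (\<lambda>_. \<nu>0)). (\<Sum>i\<in>{1..m}. y i) < h}"
  define p1 where "p1 = measure (PiM {1..m} (\<lambda>_. \<nu>1)) {y\<in>space (PiM {1..m} (\<lambda>_. \<nu>1)). (\<Sum>i\<in>{1..m}. y i) < h}"
  have Sn0: "measure (P \<infinity>) {\<omega>\<in>space (P \<infinity>). Swin f0 f1 X m n \<omega> < h} = p0" if "n \<ge> m" for n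
    unfolding SwinY win[OF that] p0_def
    by (rule winprob[OF prob[of \<infinity>] indY[of \<infinity>] _ m _ Pnu0 snu0]) (use m in \<open>auto intro: law0\<close>)
  have fa: "measure (P \<infinity>) {\<omega> \<in> space (P \<infinity>). enat l \<le> T_FMA f0 f1 X m h \<omega> \<and> T_FMA f0 f1 X m h \<omega> < enat (l + ma)}
     \<le> 1 - p0 ^ ma" if l: "l \<ge> 1" for l
  proof -
    let ?M = "P \<infinity>"
    interpret M: prob_space ?M using prob[of \<infinity>] by simp
    define N where "N = {n. m \<le> n \<and> l \<le> n \<and> n < l + ma}"
    define W where "W = {1..l+ma}"
    define w where "w n = {n-m+1..n}" for n
    have finN: "finite N" unfolding N_def by (rule finite_subset[of _ "{..<l+ma}"]) auto
    have cardN: "card N \<le> ma"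
    proof -
      have "card N \<le> card {l..<l+ma}" unfolding N_def by (rule card_mono) auto
      then show ?thesis by simp
    qed
    have wW: "w n \<subseteq> W" if "n \<in> N" for n using that m unfolding N_def W_def w_def by auto
    have W: "finite W" "W \<noteq> {}" "W \<subseteq> {1..}" unfolding W_def using l by auto
    have lawW: "distr ?M borel (Y i) = \<nu>0" if "i \<in> W" for i using law0 that unfolding W_def by auto
    let ?Q = "\<lambda>y::nat\<Rightarrow>real. \<forall>n\<in>N. (\<Sum>i\<in>w n. y i) < h"
    have Qm: "{y\<in>space (PiM W (\<lambda>_. borel)). ?Q y} \<in> sets (PiM W (\<lambda>_. borel))"
      by (rule sets.sets_Collect_finite_All[OF _ finN], rule sumset_meas) (use wW in auto)
    have rsum: "(\<Sum>i\<in>w n. (\<lambda>i\<in>W. Y i \<omega>) i) = (\<Sum>i\<in>w n. Y i \<omega>)" if "n \<in> N" for n \<omega>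
      using wW[OF that] by (intro sum.cong) auto
    define G where "G = {\<omega>\<in>space ?M. \<forall>n\<in>N. (\<Sum>i\<in>w n. Y i \<omega>) < h}"
    have TG: "{\<omega>\<in>space ?M. ?Q (\<lambda>i\<in>W. Y i \<omega>)} = G" unfolding G_def using rsum by auto
    note tr = transfer[OF prob[of \<infinity>] indY[of \<infinity>] W lawW snu0 Qm, unfolded TG]
    have Gm: "G \<in> sets ?M" using tr by simp
    have fac: "measure (PiM W (\<lambda>_. \<nu>0)) {y\<in>space (PiM W (\<lambda>_. \<nu>0)). (\<Sum>i\<in>w n. y i) < h} = p0"
      if n: "n \<in> N" for n
    proof -
      have nm: "n \<ge> m" using n unfolding N_def by auto
      have Qm1: "{y\<in>space (PiM W (\<lambda>_. borel)). (\<Sum>i\<in>w n. y i) < h} \<in> sets (PiM W (\<lambda>_. borel))"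
        by (rule sumset_meas) (use wW[OF n] in auto)
      have "{\<omega>\<in>space ?M. (\<Sum>i\<in>w n. (\<lambda>i\<in>W. Y i \<omega>) i) < h} = {\<omega>\<in>space ?M. Swin f0 f1 X m n \<omega> < h}"
        using rsum[OF n] by (auto simp: SwinY w_def)
      then show ?thesis
        using transfer[OF prob[of \<infinity>] indY[of \<infinity>] W lawW snu0 Qm1] Sn0[OF nm] by auto
    qed
    have "(\<Prod>n\<in>N. measure (PiM W (\<lambda>_. \<nu>0)) {y\<in>space (PiM W (\<lambda>_. \<nu>0)). (\<Sum>i\<in>w n. y i) < h})
        \<le> measure (PiM W (\<lambda>_. \<nu>0)) {y\<in>space (PiM W (\<lambda>_. \<nu>0)). ?Q y}"
      by (rule harris_events[OF Pnu0 snu0 W(1) finN wW])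
    then have pG: "p0 ^ card N \<le> measure ?M G" using fac tr by simp
    have p01: "0 \<le> p0" "p0 \<le> 1" unfolding p0_def
      using prob_space.prob_le_1[OF prob_space_PiM[OF Pnu0]] by auto
    have "p0 ^ ma \<le> p0 ^ card N" by (rule power_decreasing[OF cardN p01])
    have sub: "{\<omega> \<in> space ?M. enat l \<le> T_FMA f0 f1 X m h \<omega> \<and> T_FMA f0 f1 X m h \<omega> < enat (l + ma)} \<subseteq> space ?M - G"
    proof safe
      fix \<omega> assume \<omega>: "\<omega> \<in> space ?M" "enat l \<le> T_FMA f0 f1 X m h \<omega>" "T_FMA f0 f1 X m h \<omega> < enat (l + ma)" "\<omega> \<in> G"
      from \<omega>(3) obtain n where n: "m \<le> n" "n < l + ma" "\<not> Swin f0 f1 X m n \<omega> < h"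
        using T_ge[of "l+ma" f0 f1 X m h \<omega>] by (auto simp: not_le)
      have "l \<le> n" using \<omega>(2) n T_ge[of l f0 f1 X m h \<omega>] by (meson not_le)
      then have "n \<in> N" using n unfolding N_def by auto
      then show False using \<omega>(4) n(3) unfolding G_def by (auto simp: SwinY w_def)
    qed
    have "measure ?M {\<omega> \<in> space ?M. enat l \<le> T_FMA f0 f1 X m h \<omega> \<and> T_FMA f0 f1 X m h \<omega> < enat (l + ma)}
       \<le> measure ?M (space ?M - G)"
      by (rule M.finite_measure_mono[OF sub]) (use Gm in auto)
    also have "\<dots> = 1 - measure ?M G" using M.prob_compl[OF Gm] by simp
    finally show ?thesis using pG \<open>p0 ^ ma \<le> p0 ^ card N\<close> by linarith
  qed
  have md: "cprob (P (enat v)) {\<omega> \<in> space (P (enat v)). T_FMA f0 f1 X m h \<omega> \<ge> enat (v + m)}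
       {\<omega> \<in> space (P (enat v)). T_FMA f0 f1 X m h \<omega> \<ge> enat v} \<le> p1" if v: "v \<ge> 1" for v
  proof -
    let ?M = "P (enat v)"
    have v1: "enat v \<ge> 1" using v by (simp add: one_enat_def)
    interpret M: prob_space ?M using prob[OF v1] by simp
    define a where "a = v - 1"
    define L1 where "L1 = {1..<v}"
    define L2 where "L2 = {a+1..a+m}"
    define w where "w n = {n-m+1..n}" for n
    let ?T = "T_FMA f0 f1 X m h"
    have ind: "M.indep_vars (\<lambda>_. borel) Y {1..}" using indY[OF v1] .
    have L12: "L1 \<inter> L2 = {}" "L1 \<subseteq> {1..}" "L2 \<subseteq> {1..}" unfolding L1_def L2_def a_def using v by auto
    note iv = M.indep_var_restrict[OF ind L12]
    define S1 where "S1 = {y\<in>space (PiM L1 (\<lambda>_. borel)). \<forall>n\<in>{m..<v}. (\<Sum>i\<in>w n. y i) < h}"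
    define S2 where "S2 = {y\<in>space (PiM L2 (\<lambda>_. borel)). (\<Sum>i\<in>L2. y i) < h}"
    have wL1: "w n \<subseteq> L1" if "n \<in> {m..<v}" for n using that m unfolding w_def L1_def by auto
    have S1m: "S1 \<in> sets (PiM L1 (\<lambda>_. borel))" unfolding S1_def
      by (rule sets.sets_Collect_finite_All, rule sumset_meas) (use wL1 in auto)
    have S2m: "S2 \<in> sets (PiM L2 (\<lambda>_. borel))" unfolding S2_def by (rule sumset_meas) auto
    let ?V1 = "\<lambda>\<omega>. restrict (\<lambda>i. Y i \<omega>) L1"
    let ?V2 = "\<lambda>\<omega>. restrict (\<lambda>i. Y i \<omega>) L2"
    define B where "B = {\<omega>\<in>space ?M. Swin f0 f1 X m (v+m-1) \<omega> < h}"
    define C where "C = {\<omega> \<in> space ?M. ?T \<omega> \<ge> enat v}"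
    define A where "A = {\<omega> \<in> space ?M. ?T \<omega> \<ge> enat (v + m)}"
    have BL2: "Swin f0 f1 X m (v+m-1) \<omega> = (\<Sum>i\<in>L2. Y i \<omega>)" for \<omega>
      unfolding SwinY L2_def a_def using v m by (intro sum.cong) auto
    have eqC: "?V1 -` S1 \<inter> space ?M = C"
    proof -
      have "(\<Sum>i\<in>w n. ?V1 \<omega> i) = Swin f0 f1 X m n \<omega>" if "n \<in> {m..<v}" for n \<omega>
        using wL1[OF that] unfolding SwinY w_def by (intro sum.cong) auto
      then show ?thesis unfolding S1_def C_def T_ge by (auto simp: space_PiM)
    qed
    have eqB: "?V2 -` S2 \<inter> space ?M = B"
    proof -
      have "(\<Sum>i\<in>L2. ?V2 \<omega> i) = (\<Sum>i\<in>L2. Y i \<omega>)" for \<omega> by (intro sum.cong) auto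
      then show ?thesis unfolding S2_def B_def BL2 by (auto simp: space_PiM)
    qed
    have eqBC: "(\<lambda>x. (?V1 x, ?V2 x)) -` (S1 \<times> S2) \<inter> space ?M = B \<inter> C"
      using eqB eqC by auto
    have indBC: "measure ?M (B \<inter> C) = measure ?M B * measure ?M C"
      using M.indep_varD[OF iv S1m S2m] unfolding eqBC eqB eqC by simp
    have rv: "Y i \<in> borel_measurable ?M" if "i \<ge> 1" for i using Ym[OF v1 that] .
    have V1m: "?V1 \<in> measurable ?M (PiM L1 (\<lambda>_. borel))"
      by (rule measurable_restrict) (use rv in \<open>auto simp: L1_def\<close>)
    have V2m: "?V2 \<in> measurable ?M (PiM L2 (\<lambda>_. borel))"
      by (rule measurable_restrict) (use rv in \<open>auto simp: L2_def\<close>)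
    have Bm: "B \<in> sets ?M" using measurable_sets[OF V2m S2m] eqB by simp
    have Cm: "C \<in> sets ?M" using measurable_sets[OF V1m S1m] eqC by simp
    have AB: "A \<subseteq> B"
    proof
      fix \<omega> assume "\<omega> \<in> A"
      then have "\<omega> \<in> space ?M" "\<forall>n. m \<le> n \<and> n < v + m \<longrightarrow> Swin f0 f1 X m n \<omega> < h"
        unfolding A_def T_ge by auto
      then show "\<omega> \<in> B" unfolding B_def using v m by auto
    qed
    have AC: "A \<inter> C = A" unfolding A_def C_def by (auto intro: order_trans[rotated])
    have lawL2: "distr ?M borel (Y i) = \<nu>1" if "i \<in> {a+1..a+m}" for i
      using that v unfolding a_def by (intro law1) auto
    have Bp: "measure ?M B = p1"
      unfolding B_def BL2 L2_def p1_def
      by (rule winprob[OF prob[OF v1] ind _ m lawL2 Pnu1 snu1]) auto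
    have "cprob ?M A C = measure ?M A / measure ?M C" unfolding cprob_def AC ..
    also have "\<dots> \<le> measure ?M (B \<inter> C) / measure ?M C"
      using AB AC by (intro divide_right_mono M.finite_measure_mono) (use Bm Cm in auto)
    also have "\<dots> \<le> measure ?M B"
      unfolding indBC by (cases "measure ?M C = 0") auto
    finally show ?thesis unfolding A_def C_def Bp .
  qed
  have p1eq: "measure (P 1) {\<omega> \<in> space (P 1). Swin f0 f1 X m m \<omega> < h} = p1"
    unfolding SwinY win[OF order_refl] p1_def one_enat_def
    by (rule winprob[OF prob indY _ m _ Pnu1 snu1]) (use m in \<open>auto intro: law1 simp: one_enat_def\<close>)
  show ?thesis
  proof
    show "P_fa P (T_FMA f0 f1 X m h) ma \<le> 1 - (measure (P \<infinity>) {\<omega> \<in> space (P \<infinity>). Swin f0 f1 X m m \<omega> < h}) ^ ma"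
      unfolding P_fa_def Sn0[OF order_refl] by (rule cSUP_least) (auto intro: fa)
    show "P_md P (T_FMA f0 f1 X m h) m \<le> measure (P 1) {\<omega> \<in> space (P 1). Swin f0 f1 X m m \<omega> < h}"
      unfolding P_md_def p1eq by (rule cSUP_least) (auto intro: md)
  qed
qed

end
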